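(* Consider the bounded-reward setting (all rewards in $[0,1]$, all mean rewards $\mu(s,a)\in(0,1]$). Then: (1) There exist a finite episodic MDP $(\mathcal S,\mathcal A,H,\mathbb P,\mu)$ and a target policy $\pi^+$ such that no reward manipulation attack satisfying the constraint below achieves the attack objective. Here a reward manipulation attack (in expectation) is specified by values $\tilde\mu_h(s,a)$ for all $h\le H$, $s\in\mathcal S$, $a\in\mathcal A$ such that $\tilde\mu_h(s,\pi^+_h(s))=\mu(s,\pi^+_h(s))$ and $\tilde\mu_h(s,a)\in[0,1]$ for $a\neq\pi^+_h(s)$; actions and transitions are not modified; the manipulated values $\tilde V^\pi_h$ are the values of policies in the MDP with transitions $\mathbb P$ and step-$h$ mean rewards $\tilde\mu_h$. (2) There exist a finite episodic MDP and a target policy $\pi^+$ such that no action manipulation attack satisfying the constraint below achieves the attack objective. Here an action manipulation attack is specified by (possibly randomized) maps assigning to each $h\le H$, $s\in\mathcal S$, $a\in\mathcal A$ an executed action $a^o\in\mathcal A$, with $a^o=a$ whenever $a=\pi^+_h(s)$; rewards are not contaminated; when the learner plays $a$ in state $s$ at step $h$, the environment produces mean reward $\mu(s,a^o)$ and next state $s'\sim\mathbb P(\cdot\mid s,a^o)$; the manipulated values $\tilde V^\pi_h$ are the values of policies in this induced environment.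
   Context: An episodic MDP $(\mathcal S,\mathcal A,H,\mathbb P,\mu)$ has finite state set $\mathcal S$, finite action set $\mathcal A$, horizon $H$ (steps per episode), stationary transition kernel $\mathbb P(\cdot\mid s,a)$ and mean reward $\mu(s,a)$. A deterministic policy $\pi=(\pi_1,\dots,\pi_H)$ consists of maps $\pi_h:\mathcal S\to\mathcal A$. The value $V^\pi_h(s)=\mathbb E[\sum_{h'=h}^H \mu(s_{h'},\pi_{h'}(s_{h'}))\mid s_h=s]$, and $\tilde V^\pi_h(s)$ denotes the analogous expected cumulative reward from step $h$ in state $s$ computed in the environment as perceived by the learner under the attack (manipulated rewards and/or manipulated dynamics). The attack objective for a target policy $\pi^+$ is: for all $h\le H$, all $s\in\mathcal S$ and every deterministic policy $\pi$ with $\pi_h(s)\neq\pi^+_h(s)$, one has $\tilde V^\pi_h(s)<\tilde V^{\pi^+}_h(s)$. *)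

theory Defs
  imports Complex_Main
begin

text \<open>Steps are h = 1..H.
  A (possibly step-dependent) environment is given by mean rewards r h s a and
  transition probabilities Q h s a s'.\<close>

fun valk :: "nat set \<Rightarrow> (nat \<Rightarrow> nat \<Rightarrow> nat \<Rightarrow> real) \<Rightarrow> (nat \<Rightarrow> nat \<Rightarrow> nat \<Rightarrow> nat \<Rightarrow> real)
             \<Rightarrow> (nat \<Rightarrow> nat \<Rightarrow> nat) \<Rightarrow> nat \<Rightarrow> nat \<Rightarrow> nat \<Rightarrow> real" where
  "valk S r Q pol h 0 s = 0"
| "valk S r Q pol h (Suc k) s =
     r h s (pol h s) + (\<Sum>s'\<in>S. Q h s (pol h s) s' * valk S r Q pol (Suc h) k s')"

definition value_fn :: "nat set \<Rightarrow> nat \<Rightarrow> (nat \<Rightarrow> nat \<Rightarrow> nat \<Rightarrow> real) \<Rightarrow> (nat \<Rightarrow> nat \<Rightarrow> nat \<Rightarrow> nat \<Rightarrow> real)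
             \<Rightarrow> (nat \<Rightarrow> nat \<Rightarrow> nat) \<Rightarrow> nat \<Rightarrow> nat \<Rightarrow> real" where
  "value_fn S H r Q pol h s = valk S r Q pol h (Suc H - h) s"

definition is_mdp :: "nat set \<Rightarrow> nat set \<Rightarrow> nat \<Rightarrow> (nat \<Rightarrow> nat \<Rightarrow> nat \<Rightarrow> real) \<Rightarrow> (nat \<Rightarrow> nat \<Rightarrow> real) \<Rightarrow> bool" where
  "is_mdp S A H P mu \<longleftrightarrow> finite S \<and> S \<noteq> {} \<and> finite A \<and> A \<noteq> {} \<and> H \<ge> 1 \<and>
     (\<forall>s\<in>S. \<forall>a\<in>A. (\<forall>s'\<in>S. P s a s' \<ge> 0) \<and> (\<Sum>s'\<in>S. P s a s') = 1) \<and>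
     (\<forall>s\<in>S. \<forall>a\<in>A. 0 < mu s a \<and> mu s a \<le> 1)"

definition is_policy :: "nat set \<Rightarrow> nat set \<Rightarrow> nat \<Rightarrow> (nat \<Rightarrow> nat \<Rightarrow> nat) \<Rightarrow> bool" where
  "is_policy S A H pol \<longleftrightarrow> (\<forall>h\<in>{1..H}. \<forall>s\<in>S. pol h s \<in> A)"

definition attack_objective :: "nat set \<Rightarrow> nat set \<Rightarrow> nat \<Rightarrow> (nat \<Rightarrow> nat \<Rightarrow> nat \<Rightarrow> real)
     \<Rightarrow> (nat \<Rightarrow> nat \<Rightarrow> nat \<Rightarrow> nat \<Rightarrow> real) \<Rightarrow> (nat \<Rightarrow> nat \<Rightarrow> nat) \<Rightarrow> bool" where
  "attack_objective S A H r Q piplus \<longleftrightarrow>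
     (\<forall>h\<in>{1..H}. \<forall>s\<in>S. \<forall>pol. is_policy S A H pol \<longrightarrow> pol h s \<noteq> piplus h s \<longrightarrow>
        value_fn S H r Q pol h s < value_fn S H r Q piplus h s)"

definition reward_attack_ok :: "nat set \<Rightarrow> nat set \<Rightarrow> nat \<Rightarrow> (nat \<Rightarrow> nat \<Rightarrow> real)
     \<Rightarrow> (nat \<Rightarrow> nat \<Rightarrow> nat) \<Rightarrow> (nat \<Rightarrow> nat \<Rightarrow> nat \<Rightarrow> real) \<Rightarrow> bool" where
  "reward_attack_ok S A H mu piplus mut \<longleftrightarrow>
     (\<forall>h\<in>{1..H}. \<forall>s\<in>S. \<forall>a\<in>A.
        (a = piplus h s \<longrightarrow> mut h s a = mu s a) \<and>
        (a \<noteq> piplus h s \<longrightarrow> 0 \<le> mut h s a \<and> mut h s a \<le> 1))"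

text \<open>Action manipulation attack: q h s a a' is the probability that action a' is
  executed when the learner plays a in state s at step h.\<close>
definition action_attack_ok :: "nat set \<Rightarrow> nat set \<Rightarrow> nat \<Rightarrow> (nat \<Rightarrow> nat \<Rightarrow> nat)
     \<Rightarrow> (nat \<Rightarrow> nat \<Rightarrow> nat \<Rightarrow> nat \<Rightarrow> real) \<Rightarrow> bool" where
  "action_attack_ok S A H piplus q \<longleftrightarrow>
     (\<forall>h\<in>{1..H}. \<forall>s\<in>S. \<forall>a\<in>A.
        (\<forall>a'\<in>A. q h s a a' \<ge> 0) \<and> (\<Sum>a'\<in>A. q h s a a') = 1 \<and>
        (a = piplus h s \<longrightarrow> (\<forall>a'\<in>A. q h s a a' = (if a' = a then 1 else 0))))"

definition action_induced_reward :: "nat set \<Rightarrow> (nat \<Rightarrow> nat \<Rightarrow> real) \<Rightarrow> (nat \<Rightarrow> nat \<Rightarrow> nat \<Rightarrow> nat \<Rightarrow> real)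
     \<Rightarrow> nat \<Rightarrow> nat \<Rightarrow> nat \<Rightarrow> real" where
  "action_induced_reward A mu q h s a = (\<Sum>a'\<in>A. q h s a a' * mu s a')"

definition action_induced_trans :: "nat set \<Rightarrow> (nat \<Rightarrow> nat \<Rightarrow> nat \<Rightarrow> real) \<Rightarrow> (nat \<Rightarrow> nat \<Rightarrow> nat \<Rightarrow> nat \<Rightarrow> real)
     \<Rightarrow> nat \<Rightarrow> nat \<Rightarrow> nat \<Rightarrow> nat \<Rightarrow> real" where
  "action_induced_trans A P q h s a s' = (\<Sum>a'\<in>A. q h s a a' * P s a' s')"

end

theory Submission
  imports Defs
begin

lemma part1:
  "\<exists>S A H P mu piplus. is_mdp S A H P mu \<and> is_policy S A H piplus \<and>
            \<not> (\<exists>mut. reward_attack_ok S A H mu piplus mut \<and>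
                 attack_objective S A H mut (\<lambda>h s a s'. P s a s') piplus)"
proof -
  define nx :: "nat \<Rightarrow> nat \<Rightarrow> nat" where "nx s a = (if s = 0 \<and> a = 0 then 0 else 1)" for s a
  define P :: "nat \<Rightarrow> nat \<Rightarrow> nat \<Rightarrow> real" where "P s a s' = (if s' = nx s a then 1 else 0)" for s a s'
  define mu :: "nat \<Rightarrow> nat \<Rightarrow> real" where "mu s a = (if s = 0 \<and> a = 0 then 1/4 else 1)" for s a
  define pp :: "nat \<Rightarrow> nat \<Rightarrow> nat" where "pp h s = 0" for h s
  have mdp: "is_mdp {0,1} {0,1} 2 P mu"
    unfolding is_mdp_def P_def mu_def nx_def by auto
  have pol: "is_policy {0,1} {0,1} 2 pp" unfolding is_policy_def pp_def by auto
  have "\<not> (\<exists>mut. reward_attack_ok {0,1} {0,1} 2 mu pp mut \<and>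
                 attack_objective {0,1} {0,1} 2 mut (\<lambda>h s a s'. P s a s') pp)"
  proof
    assume "\<exists>mut. reward_attack_ok {0,1} {0,1} 2 mu pp mut \<and>
                 attack_objective {0,1} {0,1} 2 mut (\<lambda>h s a s'. P s a s') pp"
    then obtain mut where ok: "reward_attack_ok {0,1} {0,1} 2 mu pp mut"
      and obj: "attack_objective {0,1} {0,1} 2 mut (\<lambda>h s a s'. P s a s') pp" by blast
    define pol :: "nat \<Rightarrow> nat \<Rightarrow> nat" where "pol h s = (if h = 1 then 1 else 0)" for h s
    have ip: "is_policy {0,1} {0,1} 2 pol" unfolding is_policy_def pol_def by auto
    have lt: "value_fn {0,1} 2 mut (\<lambda>h s a s'. P s a s') pol 1 0
              < value_fn {0,1} 2 mut (\<lambda>h s a s'. P s a s') pp 1 0"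
      using obj ip unfolding attack_objective_def pol_def pp_def by auto
    have m1: "mut 1 0 0 = 1/4" "mut 2 0 0 = 1/4" "mut 2 1 0 = 1" "mut 1 0 1 \<ge> 0"
      using ok unfolding reward_attack_ok_def pp_def mu_def by auto
    have "value_fn {0,1} 2 mut (\<lambda>h s a s'. P s a s') pol 1 0 = mut 1 0 1 + mut 2 1 0"
      unfolding value_fn_def by (simp add: numeral_2_eq_2 pol_def P_def nx_def)
    moreover have "value_fn {0,1} 2 mut (\<lambda>h s a s'. P s a s') pp 1 0 = mut 1 0 0 + mut 2 0 0"
      unfolding value_fn_def by (simp add: numeral_2_eq_2 pp_def P_def nx_def)
    ultimately show False using lt m1 by simp
  qed
  thus ?thesis using mdp pol by blast
qed

lemma part2:
  "\<exists>S A H P mu piplus. is_mdp S A H P mu \<and> is_policy S A H piplus \<and>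
            \<not> (\<exists>q. action_attack_ok S A H piplus q \<and>
                 attack_objective S A H (action_induced_reward A mu q)
                                        (action_induced_trans A P q) piplus)"
proof -
  define P :: "nat \<Rightarrow> nat \<Rightarrow> nat \<Rightarrow> real" where "P s a s' = 1" for s a s'
  define mu :: "nat \<Rightarrow> nat \<Rightarrow> real" where "mu s a = (if a = 0 then 1/2 else 1)" for s a
  define pp :: "nat \<Rightarrow> nat \<Rightarrow> nat" where "pp h s = 0" for h s
  have mdp: "is_mdp {0} {0,1} 1 P mu"
    unfolding is_mdp_def P_def mu_def by auto
  have pol: "is_policy {0} {0,1} 1 pp" unfolding is_policy_def pp_def by auto
  have "\<not> (\<exists>q. action_attack_ok {0} {0,1} 1 pp q \<and>
                 attack_objective {0} {0,1} 1 (action_induced_reward {0,1} mu q)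
                                        (action_induced_trans {0,1} P q) pp)"
  proof
    assume "\<exists>q. action_attack_ok {0} {0,1} 1 pp q \<and>
                 attack_objective {0} {0,1} 1 (action_induced_reward {0,1} mu q)
                                        (action_induced_trans {0,1} P q) pp"
    then obtain q where ok: "action_attack_ok {0} {0,1} 1 pp q"
      and obj: "attack_objective {0} {0,1} 1 (action_induced_reward {0,1} mu q)
                                        (action_induced_trans {0,1} P q) pp" by blast
    define pol :: "nat \<Rightarrow> nat \<Rightarrow> nat" where "pol h s = 1" for h s
    have ip: "is_policy {0} {0,1} 1 pol" unfolding is_policy_def pol_def by auto
    have lt: "value_fn {0} 1 (action_induced_reward {0,1} mu q) (action_induced_trans {0,1} P q) pol 1 0
        < value_fn {0} 1 (action_induced_reward {0,1} mu q) (action_induced_trans {0,1} P q) pp 1 0"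
      using obj ip unfolding attack_objective_def pol_def pp_def by auto
    have qq: "q 1 0 0 0 = 1" "q 1 0 0 1 = 0" "q 1 0 1 0 \<ge> 0" "q 1 0 1 1 \<ge> 0"
       "q 1 0 1 0 + q 1 0 1 1 = 1"
      using ok unfolding action_attack_ok_def pp_def by auto
    have "value_fn {0} 1 (action_induced_reward {0,1} mu q) (action_induced_trans {0,1} P q) pol 1 0
        = q 1 0 1 0 / 2 + q 1 0 1 1"
      unfolding value_fn_def by (simp add: pol_def action_induced_reward_def mu_def)
    moreover have "value_fn {0} 1 (action_induced_reward {0,1} mu q) (action_induced_trans {0,1} P q) pp 1 0
        = 1/2"
      unfolding value_fn_def using qq by (simp add: pp_def action_induced_reward_def mu_def)
    ultimately show False using lt qq by simp
  qed
  thus ?thesis using mdp pol by blast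
qed

theorem theorem1:
  shows "(\<exists>S A H P mu piplus. is_mdp S A H P mu \<and> is_policy S A H piplus \<and>
            \<not> (\<exists>mut. reward_attack_ok S A H mu piplus mut \<and>
                 attack_objective S A H mut (\<lambda>h s a s'. P s a s') piplus))
       \<and> (\<exists>S A H P mu piplus. is_mdp S A H P mu \<and> is_policy S A H piplus \<and>
            \<not> (\<exists>q. action_attack_ok S A H piplus q \<and>
                 attack_objective S A H (action_induced_reward A mu q)
                                        (action_induced_trans A P q) piplus))"
  using part1 part2 by blast

end
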